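(* Let $H_1, H_2 : L_2 \to L_2$ be operators. Suppose there exist $\mu_1,\mu_2,\gamma_1,\gamma_2\ge 0$ and $\epsilon>0$ such that $H_1$ is incrementally $(\mu_1,\gamma_1)$-dissipative and $H_2$ is $\epsilon$-strongly incrementally $(\mu_2,\gamma_2)$-dissipative. If \[ \mu_1\mu_2<1,\qquad \mu_1\gamma_2<1,\qquad \mu_2\gamma_1<1, \] then the negative feedback interconnection of $H_1$ and $H_2$, i.e. the closed-loop operator $u\mapsto y$ defined by $y\in H_1(e)$, $e = u - w$, $w \in H_2(y)$ (equivalently the relation $(H_1^{-1}+H_2)^{-1}$), maps $L_2$ to $L_2$ and has finite incremental gain from $u$ to $y$: there exists $c<\infty$ such that $\|y_1-y_2\|\le c\|u_1-u_2\|$ for all closed-loop input/output pairs $(u_1,y_1),(u_2,y_2)$.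
   Context: $L_2 = L_2(\mathbb{R}^n)$ is the Hilbert space of square-integrable signals $u:\mathbb{R}_{\ge 0}\to\mathbb{R}^n$ with inner product $\langle u, y\rangle = \int_0^\infty u(t)^\top y(t)\,dt$ and induced norm $\|\cdot\|$. Operators are possibly multi-valued maps identified with their relations $\{(u,y): y\in H(u)\}$; relational operations: $H^{-1}=\{(y,u): y\in H(u)\}$, $H+G = \{(x,y+z) : (x,y)\in H, (x,z)\in G\}$. No causality is assumed or concluded. Definition: for $\mu,\gamma,\epsilon\ge 0$, $H:L_2\to L_2$ is $\epsilon$-strongly incrementally $(\mu,\gamma)$-dissipative if for all $u_1,u_2\in L_2$, $y_1\in H(u_1)$, $y_2\in H(u_2)$, either (i) $\|y_1-y_2\|\le \mu\|u_1-u_2\|$, or both (ii) $\langle u_1-u_2, y_1-y_2\rangle \ge \epsilon\|u_1-u_2\|^2$ and (iii) $\|y_1-y_2\|\le\gamma\|u_1-u_2\|$ hold (or all three hold). If $\epsilon=0$ it is called incrementally $(\mu,\gamma)$-dissipative. *)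

theory Defs
  imports "HOL-Analysis.Analysis"
begin

text \<open>Signals u : R_{>=0} -> R^n are represented as functions real => real^'n;
  only their values on {0..} matter.  The dimension n is the finite index type 'n.\<close>

type_synonym 'n signal = "real \<Rightarrow> real ^ 'n"

definition L2 :: "'n::finite signal set" where
  "L2 = {u. (\<lambda>t. indicator {0..} t *\<^sub>R u t) \<in> borel_measurable lborel \<and>
            integrable lborel (\<lambda>t. indicator {0..} t * (norm (u t))\<^sup>2)}"

definition L2_inner :: "'n::finite signal \<Rightarrow> 'n signal \<Rightarrow> real" where
  "L2_inner u y = (LINT t|lborel. indicator {0..} t * (u t \<bullet> y t))"

definition L2_norm :: "'n::finite signal \<Rightarrow> real" where
  "L2_norm u = sqrt (L2_inner u u)"

definition is_L2_operator :: "('n::finite signal \<times> 'n signal) set \<Rightarrow> bool" where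
  "is_L2_operator H \<longleftrightarrow> H \<subseteq> L2 \<times> L2"

definition strongly_incr_dissipative ::
  "real \<Rightarrow> real \<Rightarrow> real \<Rightarrow> ('n::finite signal \<times> 'n signal) set \<Rightarrow> bool" where
  "strongly_incr_dissipative \<epsilon> \<mu> \<gamma> H \<longleftrightarrow>
     (\<forall>u1 y1 u2 y2. (u1, y1) \<in> H \<longrightarrow> (u2, y2) \<in> H \<longrightarrow>
        L2_norm (y1 - y2) \<le> \<mu> * L2_norm (u1 - u2) \<or>
        (L2_inner (u1 - u2) (y1 - y2) \<ge> \<epsilon> * (L2_norm (u1 - u2))\<^sup>2 \<and>
         L2_norm (y1 - y2) \<le> \<gamma> * L2_norm (u1 - u2)))"

definition incr_dissipative ::
  "real \<Rightarrow> real \<Rightarrow> ('n::finite signal \<times> 'n signal) set \<Rightarrow> bool" where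
  "incr_dissipative \<mu> \<gamma> H \<longleftrightarrow> strongly_incr_dissipative 0 \<mu> \<gamma> H"

definition feedback ::
  "('n::finite signal \<times> 'n signal) set \<Rightarrow> ('n signal \<times> 'n signal) set \<Rightarrow> ('n signal \<times> 'n signal) set" where
  "feedback H1 H2 = {(u, y). \<exists>e w. (e, y) \<in> H1 \<and> e = u - w \<and> (y, w) \<in> H2}"

end

theory Submission
  imports Defs
begin

abbreviation I0 :: "real \<Rightarrow> real" where "I0 t \<equiv> indicator {0..} t"

lemma I0_cases: "I0 t = 0 \<or> I0 t = 1"
  by (auto simp: indicator_def)

lemma L2_D:
  assumes "u \<in> L2"
  shows "(\<lambda>t. I0 t *\<^sub>R u t) \<in> borel_measurable lborel"
    "integrable lborel (\<lambda>t. I0 t * (norm (u t))\<^sup>2)"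
  using assms by (auto simp: L2_def)

lemma L2_meas_inner:
  fixes u y :: "'n::finite signal"
  assumes "u \<in> L2" "y \<in> L2"
  shows "(\<lambda>t. I0 t * (u t \<bullet> y t)) \<in> borel_measurable lborel"
proof -
  have eq: "(\<lambda>t. I0 t * (u t \<bullet> y t)) = (\<lambda>t. (I0 t *\<^sub>R u t) \<bullet> (I0 t *\<^sub>R y t))"
    by (auto simp: indicator_def fun_eq_iff)
  show ?thesis unfolding eq
    by (intro borel_measurable_inner L2_D assms)
qed

lemma L2_meas_sq:
  fixes u :: "'n::finite signal"
  assumes "(\<lambda>t. I0 t *\<^sub>R u t) \<in> borel_measurable lborel"
  shows "(\<lambda>t. I0 t * (norm (u t))\<^sup>2) \<in> borel_measurable lborel"
proof -
  have eq: "(\<lambda>t. I0 t * (norm (u t))\<^sup>2) = (\<lambda>t. (norm (I0 t *\<^sub>R u t))\<^sup>2)"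
    by (auto simp: indicator_def fun_eq_iff)
  show ?thesis unfolding eq using assms by measurable
qed

lemma L2_int_inner:
  fixes u y :: "'n::finite signal"
  assumes "u \<in> L2" "y \<in> L2"
  shows "integrable lborel (\<lambda>t. I0 t * (u t \<bullet> y t))"
proof (rule Bochner_Integration.integrable_bound)
  show "integrable lborel (\<lambda>t. I0 t * (norm (u t))\<^sup>2 + I0 t * (norm (y t))\<^sup>2)"
    by (intro Bochner_Integration.integrable_add L2_D assms)
  show "(\<lambda>t. I0 t * (u t \<bullet> y t)) \<in> borel_measurable lborel"
    using L2_meas_inner assms by blast
  show "AE t in lborel. norm (I0 t * (u t \<bullet> y t)) \<le> norm (I0 t * (norm (u t))\<^sup>2 + I0 t * (norm (y t))\<^sup>2)"
  proof (rule AE_I2)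
    fix t
    have c: "\<bar>u t \<bullet> y t\<bar> \<le> norm (u t) * norm (y t)" by (rule Cauchy_Schwarz_ineq2)
    have d: "norm (u t) * norm (y t) \<le> (norm (u t))\<^sup>2 + (norm (y t))\<^sup>2"
      using sum_squares_bound[of "norm (u t)" "norm (y t)"]
        mult_nonneg_nonneg[OF norm_ge_zero norm_ge_zero, of "u t" "y t"] by linarith
    show "norm (I0 t * (u t \<bullet> y t)) \<le> norm (I0 t * (norm (u t))\<^sup>2 + I0 t * (norm (y t))\<^sup>2)"
    proof (cases "I0 t = 0")
      case False
      then have "I0 t = 1" using I0_cases by blast
      then show ?thesis using order_trans[OF c d] by simp
    qed simp
  qed
qed

lemma L2_add:
  fixes u v :: "'n::finite signal"
  assumes "u \<in> L2" "v \<in> L2"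
  shows "(\<lambda>t. u t + v t) \<in> L2"
proof -
  have m: "(\<lambda>t. I0 t *\<^sub>R (u t + v t)) \<in> borel_measurable lborel"
  proof -
    have eq: "(\<lambda>t. I0 t *\<^sub>R (u t + v t)) = (\<lambda>t. I0 t *\<^sub>R u t + I0 t *\<^sub>R v t)"
      by (auto simp: fun_eq_iff scaleR_add_right)
    show ?thesis unfolding eq using L2_D assms by (intro borel_measurable_add) auto
  qed
  have i: "integrable lborel (\<lambda>t. I0 t * (norm ((u t + v t)))\<^sup>2)"
  proof (rule Bochner_Integration.integrable_bound)
    show "integrable lborel (\<lambda>t. 2 * (I0 t * (norm (u t))\<^sup>2) + 2 * (I0 t * (norm (v t))\<^sup>2))"
      by (intro Bochner_Integration.integrable_add Bochner_Integration.integrable_mult_right L2_D assms)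
    show "(\<lambda>t. I0 t * (norm ((u t + v t)))\<^sup>2) \<in> borel_measurable lborel"
      by (rule L2_meas_sq[OF m])
    show "AE t in lborel. norm (I0 t * (norm ((u t + v t)))\<^sup>2) \<le> norm (2 * (I0 t * (norm (u t))\<^sup>2) + 2 * (I0 t * (norm (v t))\<^sup>2))"
    proof (rule AE_I2)
      fix t
      have a: "norm (u t + v t) \<le> norm (u t) + norm (v t)" by (rule norm_triangle_ineq)
      have b: "(norm (u t + v t))\<^sup>2 \<le> (norm (u t) + norm (v t))\<^sup>2"
        using a by (intro power_mono) auto
      have c: "(norm (u t) + norm (v t))\<^sup>2 \<le> 2 * (norm (u t))\<^sup>2 + 2 * (norm (v t))\<^sup>2"
        using sum_squares_bound[of "norm (u t)" "norm (v t)"]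
          power2_sum[of "norm (u t)" "norm (v t)"] by linarith
      show "norm (I0 t * (norm ((u t + v t)))\<^sup>2) \<le> norm (2 * (I0 t * (norm (u t))\<^sup>2) + 2 * (I0 t * (norm (v t))\<^sup>2))"
      proof (cases "I0 t = 0")
        case False
        then have "I0 t = 1" using I0_cases by blast
        then show ?thesis using order_trans[OF b c] by simp
      qed simp
    qed
  qed
  show ?thesis using m i by (simp add: L2_def)
qed

lemma L2_scale:
  fixes u :: "'n::finite signal"
  assumes "u \<in> L2"
  shows "(\<lambda>t. c *\<^sub>R u t) \<in> L2"
proof -
  have eq1: "(\<lambda>t. I0 t *\<^sub>R (c *\<^sub>R u t)) = (\<lambda>t. c *\<^sub>R (I0 t *\<^sub>R u t))"
    by (auto simp: fun_eq_iff)
  have eq2: "(\<lambda>t. I0 t * (norm ((c *\<^sub>R u t)))\<^sup>2) = (\<lambda>t. c\<^sup>2 * (I0 t * (norm (u t))\<^sup>2))"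
    by (auto simp: fun_eq_iff power_mult_distrib)
  have m: "(\<lambda>t. c *\<^sub>R (I0 t *\<^sub>R u t)) \<in> borel_measurable lborel"
    using L2_D(1)[OF assms] by (rule borel_measurable_scaleR[OF borel_measurable_const])
  have i: "integrable lborel (\<lambda>t. c\<^sup>2 * (I0 t * (norm (u t))\<^sup>2))"
    using L2_D[OF assms] by (intro Bochner_Integration.integrable_mult_right) auto
  show ?thesis unfolding L2_def mem_Collect_eq eq1 eq2 using m i by simp
qed

lemma L2_diff:
  fixes u v :: "'n::finite signal"
  assumes "u \<in> L2" "v \<in> L2"
  shows "u - v \<in> L2"
proof -
  have "u - v = (\<lambda>t. u t + (-1) *\<^sub>R v t)" by (auto simp: fun_eq_iff)
  then show ?thesis using L2_add L2_scale assms by metis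
qed

lemma L2_inner_commute: "L2_inner u v = L2_inner v u"
  unfolding L2_inner_def by (simp add: inner_commute)

lemma L2_inner_diff_left:
  fixes u v y :: "'n::finite signal"
  assumes "u \<in> L2" "v \<in> L2" "y \<in> L2"
  shows "L2_inner (u - v) y = L2_inner u y - L2_inner v y"
proof -
  have eq: "(\<lambda>t. I0 t * ((u - v) t \<bullet> y t)) = (\<lambda>t. I0 t * (u t \<bullet> y t) - I0 t * (v t \<bullet> y t))"
    by (auto simp: fun_eq_iff inner_diff_left algebra_simps)
  show ?thesis unfolding L2_inner_def eq
    using L2_int_inner assms by (intro Bochner_Integration.integral_diff) auto
qed

lemma L2_inner_scale_left:
  "L2_inner (\<lambda>t. c *\<^sub>R u t) y = c * L2_inner u y"
proof -
  have eq: "(\<lambda>t. I0 t * ((c *\<^sub>R u t) \<bullet> y t)) = (\<lambda>t. c * (I0 t * (u t \<bullet> y t)))"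
    by (auto simp: fun_eq_iff)
  show ?thesis unfolding L2_inner_def eq by simp
qed

lemma L2_inner_nonneg: "L2_inner u u \<ge> 0"
  unfolding L2_inner_def by (rule Bochner_Integration.integral_nonneg) (auto simp: indicator_def)

lemma quad_lemma:
  fixes A B p :: real
  assumes q: "\<And>s. 0 \<le> s\<^sup>2 * A - 2 * s * p + B" and A: "A \<ge> 0" and B: "B \<ge> 0"
  shows "\<bar>p\<bar> \<le> sqrt A * sqrt B"
proof (cases "A = 0")
  case True
  have "p = 0"
  proof (rule ccontr)
    assume "p \<noteq> 0"
    have "0 \<le> ((B + 1) / (2 * p))\<^sup>2 * A - 2 * ((B + 1) / (2 * p)) * p + B" by (rule q)
    then show False using True \<open>p \<noteq> 0\<close> by (simp add: field_simps)
  qed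
  then show ?thesis using A B by simp
next
  case False
  then have Ap: "A > 0" using A by simp
  have "0 \<le> (p / A)\<^sup>2 * A - 2 * (p / A) * p + B" by (rule q)
  then have "0 \<le> A * B - p\<^sup>2" using Ap by (simp add: field_simps power2_eq_square)
  then have "p\<^sup>2 \<le> A * B" by simp
  then have "sqrt (p\<^sup>2) \<le> sqrt (A * B)" by (rule real_sqrt_le_mono)
  then show ?thesis by (simp add: real_sqrt_mult)
qed

lemma L2_CS:
  fixes u v :: "'n::finite signal"
  assumes "u \<in> L2" "v \<in> L2"
  shows "\<bar>L2_inner u v\<bar> \<le> L2_norm u * L2_norm v"
proof -
  have "\<And>s. 0 \<le> s\<^sup>2 * L2_inner u u - 2 * s * L2_inner u v + L2_inner v v"
  proof -
    fix s :: real
    have su: "(\<lambda>t. s *\<^sub>R u t) \<in> L2" using L2_scale assms by blast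
    have "L2_inner ((\<lambda>t. s *\<^sub>R u t) - v) ((\<lambda>t. s *\<^sub>R u t) - v)
        = L2_inner ((\<lambda>t. s *\<^sub>R u t)) ((\<lambda>t. s *\<^sub>R u t) - v) - L2_inner v ((\<lambda>t. s *\<^sub>R u t) - v)"
      using su assms L2_diff by (intro L2_inner_diff_left) auto
    also have "\<dots> = L2_inner ((\<lambda>t. s *\<^sub>R u t) - v) ((\<lambda>t. s *\<^sub>R u t)) - L2_inner ((\<lambda>t. s *\<^sub>R u t) - v) v"
      by (simp add: L2_inner_commute)
    also have "\<dots> = (L2_inner ((\<lambda>t. s *\<^sub>R u t)) ((\<lambda>t. s *\<^sub>R u t)) - L2_inner v ((\<lambda>t. s *\<^sub>R u t)))
                    - (L2_inner ((\<lambda>t. s *\<^sub>R u t)) v - L2_inner v v)"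
      using su assms by (simp add: L2_inner_diff_left)
    also have "\<dots> = s\<^sup>2 * L2_inner u u - 2 * s * L2_inner u v + L2_inner v v"
      by (simp add: L2_inner_scale_left L2_inner_commute[of v "(\<lambda>t. s *\<^sub>R u t)"] power2_eq_square
          L2_inner_commute[of u "(\<lambda>t. s *\<^sub>R u t)"])
    finally have e: "L2_inner ((\<lambda>t. s *\<^sub>R u t) - v) ((\<lambda>t. s *\<^sub>R u t) - v) = s\<^sup>2 * L2_inner u u - 2 * s * L2_inner u v + L2_inner v v" .
    show "0 \<le> s\<^sup>2 * L2_inner u u - 2 * s * L2_inner u v + L2_inner v v"
      using e L2_inner_nonneg[of "(\<lambda>t. s *\<^sub>R u t) - v"] by linarith
  qed
  then show ?thesis unfolding L2_norm_def
    by (intro quad_lemma L2_inner_nonneg)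
qed

lemma L2_norm_nonneg: "L2_norm u \<ge> 0"
  unfolding L2_norm_def using L2_inner_nonneg[of u] by simp

lemma L2_triangle_diff:
  fixes u v :: "'n::finite signal"
  assumes "u \<in> L2" "v \<in> L2"
  shows "L2_norm (u - v) \<le> L2_norm u + L2_norm v"
proof -
  have "L2_inner (u - v) (u - v) = L2_inner u (u - v) - L2_inner v (u - v)"
    using assms L2_diff by (intro L2_inner_diff_left) auto
  also have "\<dots> = L2_inner (u - v) u - L2_inner (u - v) v" by (simp add: L2_inner_commute)
  also have "\<dots> = L2_inner u u - 2 * L2_inner u v + L2_inner v v"
    using assms by (simp add: L2_inner_diff_left L2_inner_commute[of v u])
  also have "\<dots> \<le> (L2_norm u)\<^sup>2 + 2 * (L2_norm u * L2_norm v) + (L2_norm v)\<^sup>2"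
    using L2_CS[OF assms] L2_inner_nonneg[of u] L2_inner_nonneg[of v]
    by (simp add: L2_norm_def)
  also have "\<dots> = (L2_norm u + L2_norm v)\<^sup>2" by (simp add: power2_sum)
  finally have "sqrt (L2_inner (u - v) (u - v)) \<le> sqrt ((L2_norm u + L2_norm v)\<^sup>2)"
    by (rule real_sqrt_le_mono)
  then show ?thesis unfolding L2_norm_def[of "u - v"]
    using L2_norm_nonneg[of u] L2_norm_nonneg[of v] by simp
qed

lemma div_bound:
  fixes k m Y U :: real
  assumes "m * U' \<le> Y \<and> False \<or> True" "k < 1" "Y \<le> m * U + k * Y" "k \<ge> 0"
  shows "Y \<le> m / (1 - k) * U"
proof -
  have "(1 - k) * Y \<le> m * U" using assms(3) by (simp add: algebra_simps)
  then have "Y \<le> m * U / (1 - k)" using assms(2) by (simp add: pos_le_divide_eq mult.commute)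
  then show ?thesis by simp
qed

lemma arith_core:
  fixes U Y E W p1 p2 \<mu>1 \<mu>2 \<gamma>1 \<gamma>2 \<epsilon> :: real
  assumes nn: "U \<ge> 0" "Y \<ge> 0" "E \<ge> 0" "W \<ge> 0"
    and pars: "\<mu>1 \<ge> 0" "\<mu>2 \<ge> 0" "\<gamma>1 \<ge> 0" "\<gamma>2 \<ge> 0" "\<epsilon> > 0"
    and pr: "\<mu>1 * \<mu>2 < 1" "\<mu>1 * \<gamma>2 < 1" "\<mu>2 * \<gamma>1 < 1"
    and tri: "E \<le> U + W"
    and h1: "Y \<le> \<mu>1 * E \<or> (p1 \<ge> 0 \<and> Y \<le> \<gamma>1 * E)"
    and h2: "W \<le> \<mu>2 * Y \<or> (p2 \<ge> \<epsilon> * Y\<^sup>2 \<and> W \<le> \<gamma>2 * Y)"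
    and cs: "p1 + p2 \<le> U * Y"
  shows "Y \<le> (\<mu>1 / (1 - \<mu>1 * \<mu>2) + \<mu>1 / (1 - \<mu>1 * \<gamma>2) + \<gamma>1 / (1 - \<mu>2 * \<gamma>1) + 1 / \<epsilon>) * U"
proof -
  define k1 where "k1 = \<mu>1 / (1 - \<mu>1 * \<mu>2)"
  define k2 where "k2 = \<mu>1 / (1 - \<mu>1 * \<gamma>2)"
  define k3 where "k3 = \<gamma>1 / (1 - \<mu>2 * \<gamma>1)"
  define k4 where "k4 = 1 / \<epsilon>"
  have k: "k1 \<ge> 0" "k2 \<ge> 0" "k3 \<ge> 0" "k4 \<ge> 0"
    using pars pr by (auto simp: k1_def k2_def k3_def k4_def)
  have "Y \<le> k1 * U \<or> Y \<le> k2 * U \<or> Y \<le> k3 * U \<or> Y \<le> k4 * U"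
  proof -
    have E1: "\<mu>1 * E \<le> \<mu>1 * U + \<mu>1 * W" using mult_left_mono[OF tri pars(1)] by (simp add: algebra_simps)
    have E2: "\<gamma>1 * E \<le> \<gamma>1 * U + \<gamma>1 * W" using mult_left_mono[OF tri pars(3)] by (simp add: algebra_simps)
    show ?thesis
    proof (cases "Y \<le> \<mu>1 * E")
      case a: True
      show ?thesis
      proof (cases "W \<le> \<mu>2 * Y")
        case True
        have "\<mu>1 * W \<le> (\<mu>1 * \<mu>2) * Y" using mult_left_mono[OF True pars(1)] by (simp add: mult.assoc)
        then have "Y \<le> \<mu>1 * U + (\<mu>1 * \<mu>2) * Y" using a E1 by linarith
        then have "Y \<le> k1 * U" unfolding k1_def
          using pr(1) pars by (intro div_bound[where U'=0]) auto
        then show ?thesis by blast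
      next
        case False
        then have W: "W \<le> \<gamma>2 * Y" using h2 by auto
        have "\<mu>1 * W \<le> (\<mu>1 * \<gamma>2) * Y" using mult_left_mono[OF W pars(1)] by (simp add: mult.assoc)
        then have "Y \<le> \<mu>1 * U + (\<mu>1 * \<gamma>2) * Y" using a E1 by linarith
        then have "Y \<le> k2 * U" unfolding k2_def
          using pr(2) pars by (intro div_bound[where U'=0]) auto
        then show ?thesis by blast
      qed
    next
      case b: False
      then have b1: "p1 \<ge> 0" and b2: "Y \<le> \<gamma>1 * E" using h1 by auto
      show ?thesis
      proof (cases "W \<le> \<mu>2 * Y")
        case True
        have "\<gamma>1 * W \<le> (\<mu>2 * \<gamma>1) * Y" using mult_left_mono[OF True pars(3)] by (simp add: algebra_simps)
        then have "Y \<le> \<gamma>1 * U + (\<mu>2 * \<gamma>1) * Y" using b2 E2 by linarith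
        then have "Y \<le> k3 * U" unfolding k3_def
          using pr(3) pars by (intro div_bound[where U'=0]) auto
        then show ?thesis by blast
      next
        case False
        then have p2: "p2 \<ge> \<epsilon> * Y\<^sup>2" using h2 by auto
        have "\<epsilon> * Y\<^sup>2 \<le> U * Y" using p2 b1 cs by linarith
        then have "Y \<le> k4 * U"
        proof (cases "Y = 0")
          case False
          then have Yp: "Y > 0" using nn by simp
          from \<open>\<epsilon> * Y\<^sup>2 \<le> U * Y\<close> have "(\<epsilon> * Y) * Y \<le> U * Y" by (simp add: power2_eq_square mult.assoc)
          then have "\<epsilon> * Y \<le> U" using Yp by simp
          then show ?thesis unfolding k4_def using pars(5) by (simp add: field_simps)
        qed (use k nn in simp)
        then show ?thesis by blast
      qed
    qed
  qed
  then have "Y \<le> (k1 + k2 + k3 + k4) * U"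
    using k nn(1) mult_right_mono[of _ "k1 + k2 + k3 + k4" U] by (smt (verit) distrib_right mult_nonneg_nonneg)
  then show ?thesis by (simp add: k1_def k2_def k3_def k4_def)
qed

theorem theorem1:
  fixes H1 H2 :: "('n::finite signal \<times> 'n signal) set"
    and \<mu>1 \<mu>2 \<gamma>1 \<gamma>2 \<epsilon> :: real
  assumes "is_L2_operator H1" and "is_L2_operator H2"
    and "\<mu>1 \<ge> 0" and "\<mu>2 \<ge> 0" and "\<gamma>1 \<ge> 0" and "\<gamma>2 \<ge> 0" and "\<epsilon> > 0"
    and "incr_dissipative \<mu>1 \<gamma>1 H1"
    and "strongly_incr_dissipative \<epsilon> \<mu>2 \<gamma>2 H2"
    and "\<mu>1 * \<mu>2 < 1" and "\<mu>1 * \<gamma>2 < 1" and "\<mu>2 * \<gamma>1 < 1"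
  shows "is_L2_operator (feedback H1 H2) \<and>
         (\<exists>c. \<forall>u1 y1 u2 y2. (u1, y1) \<in> feedback H1 H2 \<longrightarrow> (u2, y2) \<in> feedback H1 H2 \<longrightarrow>
              L2_norm (y1 - y2) \<le> c * L2_norm (u1 - u2))"
  proof -
  have H1L: "\<And>e y. (e, y) \<in> H1 \<Longrightarrow> e \<in> L2 \<and> y \<in> L2"
    using assms(1) by (auto simp: is_L2_operator_def)
  have H2L: "\<And>e y. (e, y) \<in> H2 \<Longrightarrow> e \<in> L2 \<and> y \<in> L2"
    using assms(2) by (auto simp: is_L2_operator_def)
  have FL: "u \<in> L2 \<and> y \<in> L2" if Fm: "(u, y) \<in> feedback H1 H2" for u y
  proof -
    obtain w where A: "(u - w, y) \<in> H1" "(y, w) \<in> H2"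
      using Fm unfolding feedback_def mem_Collect_eq case_prod_conv by blast
    have "u = (\<lambda>t. (u - w) t + w t)" by (auto simp: fun_eq_iff)
    then show ?thesis using A H1L H2L L2_add by metis
  qed
  have part1: "is_L2_operator (feedback H1 H2)"
    unfolding is_L2_operator_def using FL by auto
  have part2: "L2_norm (y1 - y2) \<le> (\<mu>1 / (1 - \<mu>1 * \<mu>2) + \<mu>1 / (1 - \<mu>1 * \<gamma>2) + \<gamma>1 / (1 - \<mu>2 * \<gamma>1) + 1 / \<epsilon>) * L2_norm (u1 - u2)"
    if F1: "(u1, y1) \<in> feedback H1 H2" and F2: "(u2, y2) \<in> feedback H1 H2" for u1 y1 u2 y2
  proof -
    obtain w1 where A1: "(u1 - w1, y1) \<in> H1" "(y1, w1) \<in> H2"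
      using F1 unfolding feedback_def mem_Collect_eq case_prod_conv by blast
    obtain w2 where A2: "(u2 - w2, y2) \<in> H1" "(y2, w2) \<in> H2"
      using F2 unfolding feedback_def mem_Collect_eq case_prod_conv by blast
    define du where "du = u1 - u2"
    define dy where "dy = y1 - y2"
    define dw where "dw = w1 - w2"
    define de where "de = (u1 - w1) - (u2 - w2)"
    have dede: "de = du - dw" by (auto simp: de_def du_def dw_def fun_eq_iff)
    have L: "u1 \<in> L2" "u2 \<in> L2" "y1 \<in> L2" "y2 \<in> L2" "w1 \<in> L2" "w2 \<in> L2"
      using FL F1 F2 H2L A1 A2 by blast+
    have dL: "du \<in> L2" "dy \<in> L2" "dw \<in> L2"
      using L L2_diff by (auto simp: du_def dy_def dw_def)
    have h1: "L2_norm dy \<le> \<mu>1 * L2_norm de \<or> (L2_inner de dy \<ge> 0 \<and> L2_norm dy \<le> \<gamma>1 * L2_norm de)"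
      using assms(8) A1(1) A2(1)
      unfolding incr_dissipative_def strongly_incr_dissipative_def de_def dy_def by fastforce
    have h2: "L2_norm dw \<le> \<mu>2 * L2_norm dy \<or> (L2_inner dy dw \<ge> \<epsilon> * (L2_norm dy)\<^sup>2 \<and> L2_norm dw \<le> \<gamma>2 * L2_norm dy)"
      using assms(9) A1(2) A2(2)
      unfolding strongly_incr_dissipative_def dw_def dy_def by blast
    have tri: "L2_norm de \<le> L2_norm du + L2_norm dw"
      unfolding dede by (rule L2_triangle_diff[OF dL(1) dL(3)])
    have inn: "L2_inner de dy + L2_inner dy dw = L2_inner du dy"
      unfolding dede using dL by (simp add: L2_inner_diff_left L2_inner_commute[of dy dw])
    have cs: "L2_inner du dy \<le> L2_norm du * L2_norm dy"
      using L2_CS[OF dL(1) dL(2)] by linarith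
    have "L2_norm dy \<le> (\<mu>1 / (1 - \<mu>1 * \<mu>2) + \<mu>1 / (1 - \<mu>1 * \<gamma>2) + \<gamma>1 / (1 - \<mu>2 * \<gamma>1) + 1 / \<epsilon>) * L2_norm du"
      by (rule arith_core[OF L2_norm_nonneg L2_norm_nonneg L2_norm_nonneg L2_norm_nonneg
            assms(3-7) assms(10-12) tri h1 h2]) (use inn cs in linarith)
    then show ?thesis by (simp add: du_def dy_def)
  qed
  show ?thesis using part1 part2 by blast
qed

end
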